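(* Let $V$ be a finite-dimensional real representation of $SO(3)$ and $v\in V$. Then $\dim\mathbf{Cov}_2(v)\in\{1,2,3,4,6\}$, and the symmetry class of $\mathbf{Cov}_2(v)$ is: $[SO(3)]$ iff $\dim\mathbf{Cov}_2(v)=1$; $[O(2)]$ iff $\dim=2$; $[\mathbb{D}_2]$ iff $\dim=3$; $[\mathbb{Z}_2]$ iff $\dim=4$; $[\{1\}]$ iff $\dim=6$.
   Context: $\mathbf{Cov}_2(v)\subset\mathrm{Sym}^2(\mathbb{R}^3)$ is the set of values at $v$ of all $SO(3)$-equivariant polynomial maps $V\to\mathrm{Sym}^2(\mathbb{R}^3)$ (with action $g\star\mathbf{a}=g\mathbf{a}g^{T}$); it is a linear subspace. The symmetry group of a subspace is the set of $g\in SO(3)$ fixing each element, and its symmetry class is its conjugacy class. $O(2)$: generated by rotations about the $z$-axis and the rotation by $\pi$ about the $x$-axis; $\mathbb{D}_2$: identity and rotations by $\pi$ about the three coordinate axes; $\mathbb{Z}_2$: identity and the rotation by $\pi$ about the $z$-axis. *)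

theory Defs
  imports "HOL-Analysis.Analysis"
begin

type_synonym mat3 = "real^3^3"

definition SO3 :: "mat3 set" where
  "SO3 = {g. transpose g ** g = mat 1 \<and> det g = 1}"

definition SO3_rep :: "(mat3 \<Rightarrow> 'v::euclidean_space \<Rightarrow> 'v) \<Rightarrow> bool" where
  "SO3_rep rho \<longleftrightarrow>
     (\<forall>g\<in>SO3. linear (rho g)) \<and>
     rho (mat 1) = id \<and>
     (\<forall>g\<in>SO3. \<forall>h\<in>SO3. rho (g ** h) = rho g \<circ> rho h) \<and>
     (\<forall>x. continuous_on SO3 (\<lambda>g. rho g x))"

inductive_set poly_fun :: "('v::euclidean_space \<Rightarrow> real) set" where
  const: "(\<lambda>x. c) \<in> poly_fun"
| lin: "linear l \<Longrightarrow> l \<in> poly_fun"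
| add: "p \<in> poly_fun \<Longrightarrow> q \<in> poly_fun \<Longrightarrow> (\<lambda>x. p x + q x) \<in> poly_fun"
| mult: "p \<in> poly_fun \<Longrightarrow> q \<in> poly_fun \<Longrightarrow> (\<lambda>x. p x * q x) \<in> poly_fun"

text \<open>Sym^2(R^3) = symmetric 3x3 matrices, with action g * a = g a g^T.\<close>
definition Sym2 :: "mat3 set" where
  "Sym2 = {a. transpose a = a}"

definition act2 :: "mat3 \<Rightarrow> mat3 \<Rightarrow> mat3" where
  "act2 g a = g ** a ** transpose g"

definition equiv_poly_map :: "(mat3 \<Rightarrow> 'v::euclidean_space \<Rightarrow> 'v) \<Rightarrow> ('v \<Rightarrow> mat3) \<Rightarrow> bool" where
  "equiv_poly_map rho f \<longleftrightarrow>
     (\<forall>i j. (\<lambda>x. f x $ i $ j) \<in> poly_fun) \<and>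
     (\<forall>x. f x \<in> Sym2) \<and>
     (\<forall>g\<in>SO3. \<forall>x. f (rho g x) = act2 g (f x))"

definition Cov2 :: "(mat3 \<Rightarrow> 'v::euclidean_space \<Rightarrow> 'v) \<Rightarrow> 'v \<Rightarrow> mat3 set" where
  "Cov2 rho v = {f v | f. equiv_poly_map rho f}"

definition sym_group :: "mat3 set \<Rightarrow> mat3 set" where
  "sym_group S = {g\<in>SO3. \<forall>a\<in>S. act2 g a = a}"

definition has_sym_class :: "mat3 set \<Rightarrow> mat3 set \<Rightarrow> bool" where
  "has_sym_class S H \<longleftrightarrow> (\<exists>h\<in>SO3. sym_group S = (\<lambda>g. h ** g ** transpose h) ` H)"

definition rotz :: "real \<Rightarrow> mat3" where
  "rotz t = vector [vector [cos t, - sin t, 0], vector [sin t, cos t, 0], vector [0, 0, 1]]"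

definition diag3 :: "real \<Rightarrow> real \<Rightarrow> real \<Rightarrow> mat3" where
  "diag3 a b c = vector [vector [a, 0, 0], vector [0, b, 0], vector [0, 0, c]]"

definition O2 :: "mat3 set" where
  "O2 = range rotz \<union> (\<lambda>t. rotz t ** diag3 1 (-1) (-1)) ` UNIV"

definition D2 :: "mat3 set" where
  "D2 = {mat 1, diag3 1 (-1) (-1), diag3 (-1) 1 (-1), diag3 (-1) (-1) 1}"

definition Z2 :: "mat3 set" where
  "Z2 = {mat 1, diag3 (-1) (-1) 1}"

end

theory Submission imports Defs begin

lemma mat3_eq: "(A::mat3) = B \<longleftrightarrow> (\<forall>i j. A$i$j = B$i$j)"
  by (simp add: vec_eq_iff)

lemmas M3 = matrix_matrix_mult_def transpose_def mat_def sum_3 forall_3 act2_def diag3_def rotz_def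
  matrix_vector_mult_def

lemma SO3_tt: "g \<in> SO3 \<Longrightarrow> transpose g ** g = mat 1"
  unfolding SO3_def by auto
lemma SO3_tt2: "g \<in> SO3 \<Longrightarrow> g ** transpose g = mat 1"
  unfolding SO3_def using matrix_left_right_inverse by auto
lemma SO3_det: "g \<in> SO3 \<Longrightarrow> det g = 1"
  unfolding SO3_def by auto
lemma SO3_transpose: "g \<in> SO3 \<Longrightarrow> transpose g \<in> SO3"
  unfolding SO3_def using SO3_tt2[of g] by (auto simp: SO3_def)
lemma SO3_mult: "g \<in> SO3 \<Longrightarrow> h \<in> SO3 \<Longrightarrow> g ** h \<in> SO3"
proof -
  assume g: "g \<in> SO3" and h: "h \<in> SO3"
  have "transpose (g ** h) ** (g ** h) = transpose h ** (transpose g ** g) ** h"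
    by (simp add: matrix_transpose_mul matrix_mul_assoc)
  also have "\<dots> = mat 1" using g h by (simp add: SO3_tt)
  finally show ?thesis using g h by (simp add: SO3_def det_mul)
qed
lemma SO3_one: "mat 1 \<in> SO3"
  by (simp add: SO3_def transpose_mat)

lemma act2_mult: "act2 (g ** h) A = act2 g (act2 h A)"
  by (simp add: act2_def matrix_transpose_mul matrix_mul_assoc)
lemma act2_inv1: "g \<in> SO3 \<Longrightarrow> act2 g (act2 (transpose g) A) = A"
  by (simp add: act2_def matrix_mul_assoc SO3_tt2) (simp add: matrix_mul_assoc[symmetric] SO3_tt2)
lemma act2_inv2: "g \<in> SO3 \<Longrightarrow> act2 (transpose g) (act2 g A) = A"
  using act2_inv1[of "transpose g" A] SO3_transpose by auto
lemma act2_one: "act2 (mat 1) A = A"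
  by (simp add: act2_def transpose_mat)
lemma act2_I: "g \<in> SO3 \<Longrightarrow> act2 g (mat 1) = mat 1"
  by (simp add: act2_def SO3_tt2)
lemma matrix_add_rdistrib3: "((A::mat3) + B) ** C = A ** C + B ** C"
  by (simp add: vec_eq_iff M3 algebra_simps)
lemma act2_add: "act2 g (A + B) = act2 g A + act2 g B"
  by (simp add: act2_def matrix_add_ldistrib matrix_add_rdistrib3)
lemma act2_scale: "act2 g (c *\<^sub>R A) = c *\<^sub>R act2 g A"
  by (simp add: act2_def matrix_scalar_ac scalar_matrix_assoc)
lemma act2_sq: "g \<in> SO3 \<Longrightarrow> act2 g (A ** B) = act2 g A ** act2 g B"
proof -
  assume g: "g \<in> SO3"
  have "act2 g A ** act2 g B = g ** A ** (transpose g ** g) ** B ** transpose g"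
    by (simp add: act2_def matrix_mul_assoc)
  then show ?thesis using g by (simp add: SO3_tt act2_def matrix_mul_assoc)
qed
lemma act2_linear: "linear (act2 g)"
  by (rule linearI) (simp_all add: act2_add act2_scale)
lemma act2_sym: "A \<in> Sym2 \<Longrightarrow> act2 g A \<in> Sym2"
  by (simp add: Sym2_def act2_def matrix_transpose_mul matrix_mul_assoc)

definition Jor :: "mat3 set \<Rightarrow> bool" where
  "Jor W \<longleftrightarrow> subspace W \<and> W \<subseteq> Sym2 \<and> mat 1 \<in> W \<and> (\<forall>A\<in>W. A ** A \<in> W)"

lemma Jor_J2: assumes "Jor W" "A \<in> W" "B \<in> W" shows "A ** B + B ** A \<in> W"
proof -
  have s: "subspace W" and q: "\<And>X. X \<in> W \<Longrightarrow> X ** X \<in> W" using assms(1) by (auto simp: Jor_def)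
  have "(A + B) ** (A + B) - A ** A - B ** B \<in> W"
    by (intro subspace_diff s q subspace_add assms)
  moreover have "(A + B) ** (A + B) - A ** A - B ** B = A ** B + B ** A"
    by (simp add: matrix_add_ldistrib matrix_add_rdistrib3)
  ultimately show ?thesis by simp
qed

lemma Jor_act: assumes "Jor W" "g \<in> SO3" shows "Jor (act2 g ` W)"
  unfolding Jor_def
proof (intro conjI)
  show "subspace (act2 g ` W)" using assms(1) by (simp add: Jor_def linear_subspace_image act2_linear)
  show "act2 g ` W \<subseteq> Sym2" using assms(1) by (auto simp: Jor_def act2_sym)
  show "mat 1 \<in> act2 g ` W" using assms act2_I[of g] by (auto simp: Jor_def intro!: image_eqI[where x="mat 1"])
  show "\<forall>A\<in>act2 g ` W. A ** A \<in> act2 g ` W"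
    using assms by (auto simp: Jor_def act2_sq[symmetric])
qed

definition S1 :: "mat3 set" where "S1 = {A. \<exists>c. A = c *\<^sub>R mat 1}"
definition S2 :: "mat3 set" where
  "S2 = {A\<in>Sym2. A$1$2 = 0 \<and> A$1$3 = 0 \<and> A$2$3 = 0 \<and> A$1$1 = A$2$2}"
definition S3 :: "mat3 set" where
  "S3 = {A\<in>Sym2. A$1$2 = 0 \<and> A$1$3 = 0 \<and> A$2$3 = 0}"
definition S4 :: "mat3 set" where
  "S4 = {A\<in>Sym2. A$1$3 = 0 \<and> A$2$3 = 0}"
definition P13 :: "mat3 set" where
  "P13 = {A\<in>Sym2. A$1$2 = 0 \<and> A$2$3 = 0}"
definition P23 :: "mat3 set" where
  "P23 = {A\<in>Sym2. A$1$2 = 0 \<and> A$1$3 = 0}"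

definition good :: "mat3 set \<Rightarrow> bool" where
  "good W \<longleftrightarrow> (\<exists>h\<in>SO3. \<exists>S\<in>{S1,S2,S3,S4,Sym2}. W = act2 h ` S)"

lemma good_transport: assumes "g \<in> SO3" "good (act2 g ` W)" shows "good W"
proof -
  obtain h S where h: "h \<in> SO3" "S \<in> {S1,S2,S3,S4,Sym2}" "act2 g ` W = act2 h ` S"
    using assms(2) unfolding good_def by blast
  have "W = act2 (transpose g) ` (act2 g ` W)"
    using act2_inv2[OF assms(1)] by (auto simp: image_image)
  also have "\<dots> = act2 (transpose g ** h) ` S" using h(3) by (auto simp: image_image act2_mult)
  finally have "W = act2 (transpose g ** h) ` S" .
  moreover have "transpose g ** h \<in> SO3" using SO3_mult[OF SO3_transpose[OF assms(1)] h(1)] .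
  ultimately show ?thesis unfolding good_def using h(2) by blast
qed

lemma good_std: "S \<in> {S1,S2,S3,S4,Sym2} \<Longrightarrow> good S"
  unfolding good_def by (rule bexI[OF _ SO3_one], rule bexI[of _ S]) (simp_all add: act2_one)

lemma image_by_inverse: assumes "g \<in> SO3" "\<And>A. A \<in> S \<Longrightarrow> act2 g A \<in> T"
  "\<And>A. A \<in> T \<Longrightarrow> act2 (transpose g) A \<in> S" shows "T = act2 g ` S"
proof
  show "act2 g ` S \<subseteq> T" using assms(2) by auto
  show "T \<subseteq> act2 g ` S"
  proof
    fix A assume "A \<in> T"
    then have "A = act2 g (act2 (transpose g) A)" "act2 (transpose g) A \<in> S"
      using act2_inv1[OF assms(1)] assms(3) by auto
    then show "A \<in> act2 g ` S" by blast
  qed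
qed

definition E11 :: mat3 where "E11 = diag3 1 0 0"
definition E22 :: mat3 where "E22 = diag3 0 1 0"
definition E33 :: mat3 where "E33 = diag3 0 0 1"
definition Q12 :: mat3 where "Q12 = vector [vector [0,1,0], vector [1,0,0], vector [0,0,0]]"
definition Q13 :: mat3 where "Q13 = vector [vector [0,0,1], vector [0,0,0], vector [1,0,0]]"
definition Q23 :: mat3 where "Q23 = vector [vector [0,0,0], vector [0,0,1], vector [0,1,0]]"
lemmas EQ = E11_def E22_def E33_def Q12_def Q13_def Q23_def diag3_def

lemma sym_entries: "A \<in> Sym2 \<Longrightarrow> A$2$1 = A$1$2 \<and> A$3$1 = A$1$3 \<and> A$3$2 = A$2$3"
  unfolding Sym2_def by (auto simp: vec_eq_iff transpose_def)

lemma Sym2_iff: "A \<in> Sym2 \<longleftrightarrow> A$2$1 = A$1$2 \<and> A$3$1 = A$1$3 \<and> A$3$2 = A$2$3"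
  unfolding Sym2_def by (auto simp: vec_eq_iff transpose_def forall_3)

lemma decomp: "A \<in> Sym2 \<Longrightarrow> A = A$1$1 *\<^sub>R E11 + A$2$2 *\<^sub>R E22 + A$3$3 *\<^sub>R E33
   + A$1$2 *\<^sub>R Q12 + A$1$3 *\<^sub>R Q13 + A$2$3 *\<^sub>R Q23"
  unfolding Sym2_iff by (simp add: vec_eq_iff forall_3 EQ diag3_def)

lemma J2_12: "B \<in> Sym2 \<Longrightarrow> E11 ** (E22 ** B + B ** E22) + (E22 ** B + B ** E22) ** E11 = B$1$2 *\<^sub>R Q12"
  unfolding Sym2_iff by (simp add: vec_eq_iff M3 EQ)
lemma J2_13: "B \<in> Sym2 \<Longrightarrow> E11 ** (E33 ** B + B ** E33) + (E33 ** B + B ** E33) ** E11 = B$1$3 *\<^sub>R Q13"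
  unfolding Sym2_iff by (simp add: vec_eq_iff M3 EQ)
lemma J2_23: "B \<in> Sym2 \<Longrightarrow> E22 ** (E33 ** B + B ** E33) + (E33 ** B + B ** E33) ** E22 = B$2$3 *\<^sub>R Q23"
  unfolding Sym2_iff by (simp add: vec_eq_iff M3 EQ)
lemma QQ: "Q12 ** Q13 + Q13 ** Q12 = Q23" "Q12 ** Q23 + Q23 ** Q12 = Q13" "Q13 ** Q23 + Q23 ** Q13 = Q12"
  by (simp_all add: vec_eq_iff M3 EQ)

lemma Jor_sub: "Jor W \<Longrightarrow> subspace W" by (simp add: Jor_def)
lemma Jor_sym: "Jor W \<Longrightarrow> A \<in> W \<Longrightarrow> A \<in> Sym2" by (auto simp: Jor_def)
lemma Jor_scale_back: assumes "Jor W" "c *\<^sub>R X \<in> W" "c \<noteq> 0" shows "X \<in> W"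
proof -
  have "inverse c *\<^sub>R (c *\<^sub>R X) \<in> W" by (rule subspace_scale[OF Jor_sub[OF assms(1)] assms(2)])
  then show ?thesis using assms(3) by simp
qed


lemma Jor_comb6: assumes "Jor W" "X1 \<in> W" "X2 \<in> W" "X3 \<in> W" "X4 \<in> W" "X5 \<in> W" "X6 \<in> W"
  shows "a1 *\<^sub>R X1 + a2 *\<^sub>R X2 + a3 *\<^sub>R X3 + a4 *\<^sub>R X4 + a5 *\<^sub>R X5 + a6 *\<^sub>R X6 \<in> W"
  using assms Jor_sub[OF assms(1)] by (intro subspace_add subspace_scale) auto

definition px :: mat3 where "px = vector [vector [1,0,0], vector [0,0,-1], vector [0,1,0]]"
definition py :: mat3 where "py = vector [vector [0,0,-1], vector [0,1,0], vector [1,0,0]]"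

lemma px_SO3: "px \<in> SO3"
  by (simp add: SO3_def vec_eq_iff M3 px_def det_3)
lemma py_SO3: "py \<in> SO3"
  by (simp add: SO3_def vec_eq_iff M3 py_def det_3)

lemma act2_img_inv: "g \<in> SO3 \<Longrightarrow> act2 (transpose g) ` (act2 g ` S) = S"
  by (simp add: image_image act2_inv2)

lemma good_P13: "good P13"
proof -
  have "P13 = act2 px ` S4"
    by (rule image_by_inverse[OF px_SO3]) (auto simp: S4_def P13_def Sym2_iff M3 px_def)
  then have "act2 (transpose px) ` P13 = S4" using act2_img_inv[OF px_SO3, of S4] by simp
  then show ?thesis using good_transport[OF SO3_transpose[OF px_SO3], of P13] good_std[of S4]
    by (simp add: image_image act2_inv2[OF px_SO3])
qed

lemma good_P23: "good P23"
proof -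
  have "P23 = act2 py ` S4"
    by (rule image_by_inverse[OF py_SO3]) (auto simp: S4_def P23_def Sym2_iff M3 py_def)
  then have "act2 (transpose py) ` P23 = S4" using act2_img_inv[OF py_SO3, of S4] by simp
  then show ?thesis using good_transport[OF SO3_transpose[OF py_SO3], of P23] good_std[of S4]
    by (simp add: image_image act2_inv2[OF py_SO3])
qed

lemma main_S3: assumes J: "Jor W" and e: "E11 \<in> W" "E22 \<in> W" "E33 \<in> W"
  shows "good W"
proof -
  have sub: "subspace W" using J by (simp add: Jor_def)
  have WS: "W \<subseteq> Sym2" using J by (simp add: Jor_def)
  have o12: "B$1$2 *\<^sub>R Q12 \<in> W" if "B \<in> W" for B
    using that WS Jor_J2[OF J e(1) Jor_J2[OF J e(2) that]] J2_12 by auto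
  have o13: "B$1$3 *\<^sub>R Q13 \<in> W" if "B \<in> W" for B
    using that WS Jor_J2[OF J e(1) Jor_J2[OF J e(3) that]] J2_13 by auto
  have o23: "B$2$3 *\<^sub>R Q23 \<in> W" if "B \<in> W" for B
    using that WS Jor_J2[OF J e(2) Jor_J2[OF J e(3) that]] J2_23 by auto
  define k12 where "k12 = (Q12 \<in> W)"
  define k13 where "k13 = (Q13 \<in> W)"
  define k23 where "k23 = (Q23 \<in> W)"
  have n12: "\<forall>B\<in>W. B$1$2 = 0" if "\<not> k12"
    using o12 Jor_scale_back[OF J] that k12_def by blast
  have n13: "\<forall>B\<in>W. B$1$3 = 0" if "\<not> k13"
    using o13 Jor_scale_back[OF J] that k13_def by blast
  have n23: "\<forall>B\<in>W. B$2$3 = 0" if "\<not> k23"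
    using o23 Jor_scale_back[OF J] that k23_def by blast
  have t23: "k23" if "k12" "k13" using Jor_J2[OF J, of Q12 Q13] QQ that k12_def k13_def k23_def by simp
  have t13: "k13" if "k12" "k23" using Jor_J2[OF J, of Q12 Q23] QQ that k12_def k13_def k23_def by simp
  have t12: "k12" if "k13" "k23" using Jor_J2[OF J, of Q13 Q23] QQ that k12_def k13_def k23_def by simp
  have inW: "A \<in> W" if "A \<in> Sym2" "A$1$2 = 0 \<or> k12" "A$1$3 = 0 \<or> k13" "A$2$3 = 0 \<or> k23" for A
  proof -
    have a: "A$1$2 *\<^sub>R Q12 \<in> W" using that(2) k12_def sub
      by (cases "A$1$2 = 0") (auto simp: subspace_0 subspace_scale)
    have b: "A$1$3 *\<^sub>R Q13 \<in> W" using that(3) k13_def sub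
      by (cases "A$1$3 = 0") (auto simp: subspace_0 subspace_scale)
    have c: "A$2$3 *\<^sub>R Q23 \<in> W" using that(4) k23_def sub
      by (cases "A$2$3 = 0") (auto simp: subspace_0 subspace_scale)
    have "A$1$1 *\<^sub>R E11 + A$2$2 *\<^sub>R E22 + A$3$3 *\<^sub>R E33
      + A$1$2 *\<^sub>R Q12 + A$1$3 *\<^sub>R Q13 + A$2$3 *\<^sub>R Q23 \<in> W"
      using a b c subspace_scale[OF sub e(1)] subspace_scale[OF sub e(2)] subspace_scale[OF sub e(3)]
      by (simp add: subspace_add[OF sub])
    then show ?thesis using decomp[OF that(1)] by simp
  qed
  consider "k12 \<and> k13 \<and> k23" | "k12 \<and> \<not>k13 \<and> \<not>k23" | "\<not>k12 \<and> k13 \<and> \<not>k23"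
    | "\<not>k12 \<and> \<not>k13 \<and> k23" | "\<not>k12 \<and> \<not>k13 \<and> \<not>k23"
    using t12 t13 t23 by blast
  then show ?thesis
  proof cases
    case 1
    then have "W = Sym2" using inW WS by blast
    then show ?thesis using good_std by simp
  next
    case 2
    then have "W = S4" using inW WS n13 n23 unfolding S4_def by blast
    then show ?thesis using good_std by simp
  next
    case 3
    then have "W = P13" using inW WS n12 n23 unfolding P13_def by blast
    then show ?thesis using good_P13 by simp
  next
    case 4
    then have "W = P23" using inW WS n12 n13 unfolding P23_def by blast
    then show ?thesis using good_P23 by simp
  next
    case 5
    then have "W = S3" using inW WS n12 n13 n23 unfolding S3_def by blast
    then show ?thesis using good_std by simp
  qed
qed

lemma cs1: "cos (t::real) * cos t + sin t * sin t = 1"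
  using sin_cos_squared_add2[of t] by (simp add: power2_eq_square)
lemma cs2: "r * (cos (t::real) * cos t) + r * (sin t * sin t) = r"
  using cs1[of t] by (simp add: distrib_left[symmetric])

lemma cs3: "cos (t::real) * (cos t * a) + sin t * (sin t * a) = a"
  using cs2[of a t] by (simp add: algebra_simps)

lemma rotz_SO3: "rotz t \<in> SO3"
  by (simp add: SO3_def vec_eq_iff M3 det_3 algebra_simps)

lemma rotz_E33: "act2 (transpose (rotz t)) E33 = E33"
  by (simp add: vec_eq_iff M3 EQ)

lemma angle_exists: fixes a b r :: real assumes "r > 0" "a^2 + b^2 = r^2" shows "\<exists>t. a = r * cos t \<and> b = r * sin t"
proof -
  have "(a/r)^2 + (b/r)^2 = 1" using assms by (simp add: power_divide field_simps)
  then obtain t where "a/r = cos t" "b/r = sin t" using sincos_total_2pi by metis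
  then show ?thesis using assms(1) by (auto simp: field_simps)
qed

lemma rot_X: assumes "B \<in> Sym2" "B$1$3 = r * cos t" "B$2$3 = r * sin t"
  shows "act2 (transpose (rotz t)) (E33 ** B + B ** E33 - (2 * B$3$3) *\<^sub>R E33) = r *\<^sub>R Q13"
  using assms unfolding Sym2_iff
  by (simp add: vec_eq_iff M3 EQ algebra_simps cs2)

lemma rotz_entries: assumes "A \<in> Sym2" "A$1$3 = 0" "A$2$3 = 0"
  shows "act2 (transpose (rotz t)) A $1$1 = cos t * cos t * A$1$1 + 2 * cos t * sin t * A$1$2 + sin t * sin t * A$2$2"
    "act2 (transpose (rotz t)) A $2$2 = sin t * sin t * A$1$1 - 2 * cos t * sin t * A$1$2 + cos t * cos t * A$2$2"
    "act2 (transpose (rotz t)) A $1$2 = (cos t * cos t - sin t * sin t) * A$1$2 - cos t * sin t * (A$1$1 - A$2$2)"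
    "act2 (transpose (rotz t)) A $1$3 = 0" "act2 (transpose (rotz t)) A $2$3 = 0"
    "act2 (transpose (rotz t)) A $3$3 = A$3$3"
  using assms unfolding Sym2_iff by (simp_all add: M3 algebra_simps)

lemma poly_aux: fixes c s r :: real
  shows "(c * c - s * s) * (r * (c * c - s * s)) + 4 * c * s * (r * (s * c)) = r * (c * c + s * s) * (c * c + s * s)"
  by (simp add: algebra_simps)

lemma rotz_diag: assumes "A \<in> Sym2" "A$1$3 = 0" "A$2$3 = 0"
  shows "\<exists>t. act2 (transpose (rotz t)) A $1$2 = 0 \<and> act2 (transpose (rotz t)) A $1$3 = 0
    \<and> act2 (transpose (rotz t)) A $2$3 = 0 \<and> act2 (transpose (rotz t)) A $3$3 = A$3$3
    \<and> ((A$1$1 \<noteq> A$2$2 \<or> A$1$2 \<noteq> 0) \<longrightarrow> act2 (transpose (rotz t)) A $1$1 \<noteq> act2 (transpose (rotz t)) A $2$2)"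
proof (cases "A$1$1 = A$2$2 \<and> A$1$2 = 0")
  case True
  then show ?thesis using rotz_entries[OF assms, of 0] by (intro exI[of _ 0]) simp
next
  case False
  define a where "a = A$1$1 - A$2$2"
  define b where "b = A$1$2"
  define \<rho> where "\<rho> = sqrt (a^2 + (2*b)^2)"
  have pos: "a^2 + (2*b)^2 > 0" using False unfolding a_def b_def
    by (subst sum_power2_gt_zero_iff) auto
  then have rp: "\<rho> > 0" unfolding \<rho>_def by simp
  have rsq: "\<rho>^2 = a^2 + (2*b)^2" unfolding \<rho>_def using pos by simp
  obtain p where p: "a = \<rho> * cos p" "2*b = \<rho> * sin p" using angle_exists[OF rp rsq[symmetric]] by blast
  define t where "t = p / 2"
  have pt: "p = 2 * t" unfolding t_def by simp
  have ca: "a = \<rho> * (cos t * cos t - sin t * sin t)" using p(1) unfolding pt cos_double by (simp add: power2_eq_square)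
  have cb: "b = \<rho> * (sin t * cos t)" using p(2) unfolding pt sin_double by simp
  have e12: "(cos t * cos t - sin t * sin t) * b - cos t * sin t * a = 0"
    unfolding ca cb by (simp add: algebra_simps)
  have "(cos t * cos t * A$1$1 + 2 * cos t * sin t * A$1$2 + sin t * sin t * A$2$2)
      - (sin t * sin t * A$1$1 - 2 * cos t * sin t * A$1$2 + cos t * cos t * A$2$2)
      = (cos t * cos t - sin t * sin t) * a + 4 * cos t * sin t * b"
    unfolding a_def b_def by (simp add: algebra_simps)
  also have "\<dots> = \<rho> * (cos t * cos t + sin t * sin t) * (cos t * cos t + sin t * sin t)"
  proof -
    show ?thesis unfolding ca cb by (rule poly_aux)
  qed
  also have "\<dots> = \<rho>" unfolding cs1 by simp
  finally have e11: "(cos t * cos t * A$1$1 + 2 * cos t * sin t * A$1$2 + sin t * sin t * A$2$2)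
      - (sin t * sin t * A$1$1 - 2 * cos t * sin t * A$1$2 + cos t * cos t * A$2$2) = \<rho>" .
  show ?thesis
    apply (rule exI[of _ t])
    using rotz_entries[OF assms, of t] e12 e11 rp unfolding a_def b_def by auto
qed

lemma diag_E11: assumes J: "Jor W" and "E33 \<in> W" "D \<in> W" "D$1$2 = 0" "D$1$3 = 0" "D$2$3 = 0"
  "D$1$1 \<noteq> D$2$2" shows "E11 \<in> W"
proof -
  have sub: "subspace W" using J by (simp add: Jor_def)
  have DS: "D \<in> Sym2" using J assms(3) by (simp add: Jor_def subset_iff)
  have "D - D$2$2 *\<^sub>R mat 1 - (D$3$3 - D$2$2) *\<^sub>R E33 \<in> W"
    using assms J sub by (intro subspace_diff subspace_scale) (auto simp: Jor_def)
  moreover have "D - D$2$2 *\<^sub>R mat 1 - (D$3$3 - D$2$2) *\<^sub>R E33 = (D$1$1 - D$2$2) *\<^sub>R E11"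
    using DS assms(4-6) unfolding Sym2_iff by (simp add: vec_eq_iff M3 EQ)
  ultimately show ?thesis using Jor_scale_back[OF J] assms(7) by auto
qed

lemma E22_from: assumes J: "Jor W" and "E11 \<in> W" "E33 \<in> W" shows "E22 \<in> W"
proof -
  have "mat 1 - E11 - E33 \<in> W" using assms by (intro subspace_diff) (auto simp: Jor_def)
  moreover have "mat 1 - E11 - E33 = E22" by (simp add: vec_eq_iff M3 EQ)
  ultimately show ?thesis by simp
qed

lemma good_E33: assumes J: "Jor W" and e: "E33 \<in> W" shows "good W"
proof -
  have sub: "subspace W" using J by (simp add: Jor_def)
  have WS: "W \<subseteq> Sym2" using J by (simp add: Jor_def)
  consider (ii) "\<exists>B\<in>W. B$1$3 \<noteq> 0 \<or> B$2$3 \<noteq> 0"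
    | (iii) "\<forall>B\<in>W. B$1$3 = 0 \<and> B$2$3 = 0" "\<exists>B\<in>W. B$1$2 \<noteq> 0 \<or> B$1$1 \<noteq> B$2$2"
    | (i) "\<forall>B\<in>W. B$1$3 = 0 \<and> B$2$3 = 0 \<and> B$1$2 = 0 \<and> B$1$1 = B$2$2"
    by (metis (no_types))
  then show ?thesis
  proof cases
    case i
    have "S2 \<subseteq> W"
    proof
      fix A assume A: "A \<in> S2"
      have "mat 1 \<in> W" using J by (simp add: Jor_def)
      then have "A$1$1 *\<^sub>R (mat 1 - E33) + A$3$3 *\<^sub>R E33 \<in> W"
        using e sub by (intro subspace_add[OF sub] subspace_scale[OF sub] subspace_diff[OF sub])
      moreover have "A$1$1 *\<^sub>R (mat 1 - E33) + A$3$3 *\<^sub>R E33 = A"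
        using A unfolding S2_def Sym2_iff by (simp add: vec_eq_iff M3 EQ)
      ultimately show "A \<in> W" by simp
    qed
    moreover have "W \<subseteq> S2" using i WS unfolding S2_def by auto
    ultimately have "W = S2" by blast
    then show ?thesis using good_std by simp
  next
    case ii
    then obtain B where B: "B \<in> W" "B$1$3 \<noteq> 0 \<or> B$2$3 \<noteq> 0" by blast
    define r where "r = sqrt ((B$1$3)^2 + (B$2$3)^2)"
    have pos: "(B$1$3)^2 + (B$2$3)^2 > 0" using B(2) by (simp add: sum_power2_gt_zero_iff)
    then have rp: "r > 0" unfolding r_def by simp
    have rsq: "(B$1$3)^2 + (B$2$3)^2 = r^2" unfolding r_def using pos by simp
    obtain t where t: "B$1$3 = r * cos t" "B$2$3 = r * sin t" using angle_exists[OF rp rsq] by blast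
    define g where "g = transpose (rotz t)"
    have g: "g \<in> SO3" unfolding g_def by (rule SO3_transpose[OF rotz_SO3])
    define W' where "W' = act2 g ` W"
    have J': "Jor W'" unfolding W'_def by (rule Jor_act[OF J g])
    have X: "E33 ** B + B ** E33 - (2 * B$3$3) *\<^sub>R E33 \<in> W"
      by (rule subspace_diff[OF sub Jor_J2[OF J e B(1)] subspace_scale[OF sub e]])
    have rX: "act2 g (E33 ** B + B ** E33 - (2 * B$3$3) *\<^sub>R E33) = r *\<^sub>R Q13"
      unfolding g_def by (rule rot_X[OF subsetD[OF WS B(1)] t])
    have "act2 g (E33 ** B + B ** E33 - (2 * B$3$3) *\<^sub>R E33) \<in> W'" unfolding W'_def by (rule imageI[OF X])
    then have "r *\<^sub>R Q13 \<in> W'" by (simp only: rX)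
    moreover have "r \<noteq> 0" using rp by simp
    ultimately have q: "Q13 \<in> W'" by (rule Jor_scale_back[OF J'])
    have e3: "E33 \<in> W'" unfolding W'_def using imageI[OF e, of "act2 g"] by (simp add: g_def rotz_E33)
    have "Q13 ** Q13 \<in> W'" using J' q by (simp add: Jor_def)
    then have "Q13 ** Q13 - E33 \<in> W'" using J' e3 by (intro subspace_diff[OF Jor_sub[OF J']])
    moreover have "Q13 ** Q13 - E33 = E11" by (simp add: vec_eq_iff M3 EQ)
    ultimately have e1: "E11 \<in> W'" by simp
    have "good W'" using main_S3[OF J' e1 E22_from[OF J' e1 e3] e3] .
    then show ?thesis using good_transport[OF g, of W] unfolding W'_def by blast
  next
    case iii
    then obtain B where B: "B \<in> W" "B$1$2 \<noteq> 0 \<or> B$1$1 \<noteq> B$2$2" by blast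
    have B0: "B$1$3 = 0" "B$2$3 = 0" using iii B by auto
    define C where "C = B - B$3$3 *\<^sub>R E33"
    have CW: "C \<in> W" unfolding C_def using sub B e by (intro subspace_diff subspace_scale) auto
    have CS: "C \<in> Sym2" using CW WS by auto
    have Ce: "C$1$3 = 0" "C$2$3 = 0" "C$1$1 = B$1$1" "C$2$2 = B$2$2" "C$1$2 = B$1$2"
      unfolding C_def using B0 by (simp_all add: EQ diag3_def)
    obtain t where t: "act2 (transpose (rotz t)) C $1$2 = 0" "act2 (transpose (rotz t)) C $1$3 = 0"
      "act2 (transpose (rotz t)) C $2$3 = 0"
      "(C$1$1 \<noteq> C$2$2 \<or> C$1$2 \<noteq> 0) \<longrightarrow> act2 (transpose (rotz t)) C $1$1 \<noteq> act2 (transpose (rotz t)) C $2$2"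
      using rotz_diag[OF CS Ce(1,2)] by blast
    define g where "g = transpose (rotz t)"
    have g: "g \<in> SO3" unfolding g_def by (rule SO3_transpose[OF rotz_SO3])
    define W' where "W' = act2 g ` W"
    have J': "Jor W'" unfolding W'_def by (rule Jor_act[OF J g])
    have e3: "E33 \<in> W'" unfolding W'_def using imageI[OF e, of "act2 g"] by (simp add: g_def rotz_E33)
    have DW: "act2 g C \<in> W'" unfolding W'_def using CW by blast
    have ne: "act2 g C $1$1 \<noteq> act2 g C $2$2" using t(4) B(2) Ce unfolding g_def by auto
    have e1: "E11 \<in> W'"
      by (rule diag_E11[OF J' e3 DW]) (use t ne in \<open>simp_all add: g_def\<close>)
    have "good W'" using main_S3[OF J' e1 E22_from[OF J' e1 e3] e3] .
    then show ?thesis using good_transport[OF g, of W] unfolding W'_def by blast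
  qed
qed

definition roty :: "real \<Rightarrow> mat3" where
  "roty t = vector [vector [cos t, 0, sin t], vector [0, 1, 0], vector [- sin t, 0, cos t]]"
definition e3v :: "real^3" where "e3v = vector [0,0,1]"
definition proj :: "real^3 \<Rightarrow> mat3" where "proj u = (\<chi> i j. u$i * u$j)"

lemma roty_SO3: "roty t \<in> SO3"
  by (simp add: SO3_def vec_eq_iff M3 roty_def det_3 algebra_simps)

lemma rot_to_e3: assumes "u$1^2 + u$2^2 + u$3^2 = 1" shows "\<exists>r\<in>SO3. r *v e3v = u"
proof -
  define s where "s = sqrt (u$1^2 + u$2^2)"
  have s2: "s^2 = u$1^2 + u$2^2" unfolding s_def by simp
  have "(u$3)^2 + s^2 = 1" using assms s2 by simp
  then obtain p where p: "u$3 = cos p" "s = sin p" using sincos_total_2pi by metis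
  have "\<exists>q. u$1 = s * cos q \<and> u$2 = s * sin q"
  proof (cases "s = 0")
    case True
    then have "u$1^2 + u$2^2 = 0" using s2 by simp
    then have "u$1 = 0" "u$2 = 0" by (simp_all add: sum_power2_eq_zero_iff)
    then show ?thesis using True by simp
  next
    case False
    have "s \<ge> 0" unfolding s_def by simp
    then have "s > 0" using False by simp
    then show ?thesis using angle_exists[of s "u$1" "u$2"] s2 by simp
  qed
  then obtain q where q: "u$1 = s * cos q" "u$2 = s * sin q" by blast
  have "(rotz q ** roty p) *v e3v = u"
    using p q by (simp add: vec_eq_iff M3 roty_def e3v_def algebra_simps)
  then show ?thesis using SO3_mult[OF rotz_SO3 roty_SO3] by blast
qed

lemma act2_proj: "act2 g (proj u) = proj (g *v u)"
  by (simp add: vec_eq_iff M3 proj_def algebra_simps)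

lemma proj_e3: "proj e3v = E33"
  by (simp add: vec_eq_iff M3 proj_def e3v_def EQ)

lemma good_proj: assumes J: "Jor W" and u: "u$1^2 + u$2^2 + u$3^2 = 1" and pu: "proj u \<in> W"
  shows "good W"
proof -
  obtain r where r: "r \<in> SO3" "r *v e3v = u" using rot_to_e3[OF u] by blast
  define g where "g = transpose r"
  have g: "g \<in> SO3" unfolding g_def by (rule SO3_transpose[OF r(1)])
  have "act2 g (proj u) = proj (g *v u)" by (rule act2_proj)
  also have "g *v u = e3v" unfolding g_def r(2)[symmetric] matrix_vector_mul_assoc SO3_tt[OF r(1)] by simp
  finally have "act2 g (proj u) = E33" by (simp add: proj_e3)
  moreover have "act2 g (proj u) \<in> act2 g ` W" by (rule imageI[OF pu])
  ultimately have "E33 \<in> act2 g ` W" by simp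
  then have "good (act2 g ` W)" by (rule good_E33[OF Jor_act[OF J g]])
  then show ?thesis by (rule good_transport[OF g])
qed

lemma good_diag: assumes J: "Jor W" and D: "D \<in> W" "D \<in> S3" and ns: "\<not> (D$1$1 = D$2$2 \<and> D$2$2 = D$3$3)"
  shows "good W"
proof -
  have sub: "subspace W" using J by (simp add: Jor_def)
  have I: "mat 1 \<in> W" using J by (simp add: Jor_def)
  have DD: "D ** D \<in> W" using J D(1) by (simp add: Jor_def)
  have Ds: "D$2$1 = 0" "D$3$1 = 0" "D$3$2 = 0" "D$1$2 = 0" "D$1$3 = 0" "D$2$3 = 0"
    using D(2) unfolding S3_def Sym2_iff by auto
  define e1v :: "real^3" where "e1v = vector [1,0,0]"
  define e2v :: "real^3" where "e2v = vector [0,1,0]"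
  have u1: "e1v$1^2 + e1v$2^2 + e1v$3^2 = 1" "e2v$1^2 + e2v$2^2 + e2v$3^2 = 1" "e3v$1^2 + e3v$2^2 + e3v$3^2 = 1"
    by (simp_all add: e1v_def e2v_def e3v_def)
  consider (a) "D$1$1 \<noteq> D$2$2" "D$1$1 \<noteq> D$3$3" "D$2$2 \<noteq> D$3$3"
    | (b) "D$1$1 = D$2$2" "D$2$2 \<noteq> D$3$3"
    | (c) "D$1$1 = D$3$3" "D$2$2 \<noteq> D$3$3"
    | (d) "D$2$2 = D$3$3" "D$1$1 \<noteq> D$2$2"
    using ns by blast
  then show ?thesis
  proof cases
    case a
    have "D ** D - (D$2$2 + D$3$3) *\<^sub>R D + (D$2$2 * D$3$3) *\<^sub>R mat 1 \<in> W"
      by (rule subspace_add[OF sub subspace_diff[OF sub DD subspace_scale[OF sub D(1)]] subspace_scale[OF sub I]])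
    moreover have "D ** D - (D$2$2 + D$3$3) *\<^sub>R D + (D$2$2 * D$3$3) *\<^sub>R mat 1
       = ((D$1$1 - D$2$2) * (D$1$1 - D$3$3)) *\<^sub>R proj e1v"
      using Ds by (simp add: vec_eq_iff M3 proj_def e1v_def algebra_simps)
    moreover have "(D$1$1 - D$2$2) * (D$1$1 - D$3$3) \<noteq> 0" using a by simp
    ultimately have "proj e1v \<in> W" using Jor_scale_back[OF J] by metis
    then show ?thesis by (rule good_proj[OF J u1(1)])
  next
    case b
    have "D - D$1$1 *\<^sub>R mat 1 \<in> W" by (rule subspace_diff[OF sub D(1) subspace_scale[OF sub I]])
    moreover have "D - D$1$1 *\<^sub>R mat 1 = (D$3$3 - D$1$1) *\<^sub>R proj e3v"
      using Ds b by (simp add: vec_eq_iff M3 proj_def e3v_def algebra_simps)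
    moreover have "D$3$3 - D$1$1 \<noteq> 0" using b by simp
    ultimately have "proj e3v \<in> W" using Jor_scale_back[OF J] by metis
    then show ?thesis by (rule good_proj[OF J u1(3)])
  next
    case c
    have "D - D$1$1 *\<^sub>R mat 1 \<in> W" by (rule subspace_diff[OF sub D(1) subspace_scale[OF sub I]])
    moreover have "D - D$1$1 *\<^sub>R mat 1 = (D$2$2 - D$1$1) *\<^sub>R proj e2v"
      using Ds c by (simp add: vec_eq_iff M3 proj_def e2v_def algebra_simps)
    moreover have "D$2$2 - D$1$1 \<noteq> 0" using c by simp
    ultimately have "proj e2v \<in> W" using Jor_scale_back[OF J] by metis
    then show ?thesis by (rule good_proj[OF J u1(2)])
  next
    case d
    have "D - D$2$2 *\<^sub>R mat 1 \<in> W" by (rule subspace_diff[OF sub D(1) subspace_scale[OF sub I]])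
    moreover have "D - D$2$2 *\<^sub>R mat 1 = (D$1$1 - D$2$2) *\<^sub>R proj e1v"
      using Ds d by (simp add: vec_eq_iff M3 proj_def e1v_def algebra_simps)
    moreover have "D$1$1 - D$2$2 \<noteq> 0" using d by simp
    ultimately have "proj e1v \<in> W" using Jor_scale_back[OF J] by metis
    then show ?thesis by (rule good_proj[OF J u1(1)])
  qed
qed

lemma cubic_root: fixes a b c :: real shows "\<exists>t. c + b * t + a * t^2 - t^3 = 0"
proof -
  define f where "f t = c + b * t + a * t^2 - t^3" for t :: real
  define M where "M = 1 + \<bar>a\<bar> + \<bar>b\<bar> + \<bar>c\<bar>"
  have M1: "M \<ge> 1" unfolding M_def by simp
  have MM: "M \<le> M * M" using M1 by (simp add: mult_le_cancel_left1)
  have M2: "1 \<le> M * M" using M1 MM by linarith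
  have h1: "b * M \<le> \<bar>b\<bar> * (M * M)"
  proof -
    have "b * M \<le> \<bar>b\<bar> * M" using M1 by (simp add: mult_right_mono)
    also have "\<dots> \<le> \<bar>b\<bar> * (M * M)" using MM by (simp add: mult_left_mono)
    finally show ?thesis .
  qed
  have h1': "- b * M \<le> \<bar>b\<bar> * (M * M)"
  proof -
    have "- b * M \<le> \<bar>b\<bar> * M" using mult_right_mono[of "-b" "\<bar>b\<bar>" M] M1 by simp
    also have "\<dots> \<le> \<bar>b\<bar> * (M * M)" using MM by (simp add: mult_left_mono)
    finally show ?thesis .
  qed
  have h2: "c \<le> \<bar>c\<bar> * (M * M)" "- c \<le> \<bar>c\<bar> * (M * M)"
    using M2 by (smt (verit) mult_le_cancel_left1)+
  have h3: "a * (M * M) \<le> \<bar>a\<bar> * (M * M)" "- a * (M * M) \<le> \<bar>a\<bar> * (M * M)"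
    using mult_right_mono[of a "\<bar>a\<bar>" "M * M"] mult_right_mono[of "-a" "\<bar>a\<bar>" "M * M"] M2 by simp_all
  have "f M = c + b * M + a * (M * M) - M * (M * M)" unfolding f_def by (simp add: power2_eq_square power3_eq_cube)
  also have "\<dots> \<le> (\<bar>a\<bar> + \<bar>b\<bar> + \<bar>c\<bar> - M) * (M * M)"
    using h1 h2 h3 by (simp add: algebra_simps)
  also have "\<dots> = - (M * M)" unfolding M_def by (simp add: algebra_simps)
  finally have fM: "f M \<le> 0" using M2 by linarith
  have "- f (- M) = - c + b * M - a * (M * M) - M * (M * M)" unfolding f_def by (simp add: power2_eq_square power3_eq_cube)
  also have "\<dots> \<le> (\<bar>a\<bar> + \<bar>b\<bar> + \<bar>c\<bar> - M) * (M * M)"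
    using h1 h2 h3 by (simp add: algebra_simps)
  also have "\<dots> = - (M * M)" unfolding M_def by (simp add: algebra_simps)
  finally have fM': "0 \<le> f (- M)" using M2 by linarith
  have cont: "continuous_on {-M..M} f" unfolding f_def by (intro continuous_intros)
  obtain t where "f t = 0" using IVT2'[of f M 0 "-M", OF fM fM' _ cont] M1 by auto
  then show ?thesis unfolding f_def by blast
qed

lemma charpoly3: fixes A :: mat3
  shows "det (A - t *\<^sub>R mat 1) = det A
     + (- (A$1$1 * A$2$2 + A$1$1 * A$3$3 + A$2$2 * A$3$3 - A$1$2 * A$2$1 - A$1$3 * A$3$1 - A$2$3 * A$3$2)) * t
     + (A$1$1 + A$2$2 + A$3$3) * t^2 - t^3"
  by (simp add: det_3 M3 algebra_simps power2_eq_square power3_eq_cube)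

lemma eigen3: fixes A :: mat3 shows "\<exists>l u. u$1^2 + u$2^2 + u$3^2 = 1 \<and> A *v u = l *\<^sub>R u"
proof -
  obtain l where l: "det (A - l *\<^sub>R mat 1) = 0"
    using cubic_root charpoly3 by metis
  have "\<not> (\<forall>x. (A - l *\<^sub>R mat 1) *v x = 0 \<longrightarrow> x = 0)"
  proof
    assume "\<forall>x. (A - l *\<^sub>R mat 1) *v x = 0 \<longrightarrow> x = 0"
    then obtain B where "B ** (A - l *\<^sub>R mat 1) = mat 1" using matrix_left_invertible_ker by blast
    then have "invertible (A - l *\<^sub>R mat 1)" unfolding invertible_def using matrix_left_right_inverse by blast
    then show False using l invertible_det_nz by blast
  qed
  then obtain x where x: "(A - l *\<^sub>R mat 1) *v x = 0" "x \<noteq> 0" by blast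
  have Ax: "A *v x = l *\<^sub>R x" using x(1) by (simp add: vec_eq_iff M3 algebra_simps)
  define n where "n = sqrt (x$1^2 + x$2^2 + x$3^2)"
  have "x$1^2 + x$2^2 + x$3^2 \<noteq> 0"
  proof
    assume "x$1^2 + x$2^2 + x$3^2 = 0"
    then have "x$1^2 = 0" "x$2^2 = 0" "x$3^2 = 0"
      using zero_le_power2[of "x$1"] zero_le_power2[of "x$2"] zero_le_power2[of "x$3"] by linarith+
    then have "x$1 = 0" "x$2 = 0" "x$3 = 0" by simp_all
    then have "x = 0" by (simp add: vec_eq_iff forall_3)
    then show False using x(2) by simp
  qed
  moreover have "x$1^2 + x$2^2 + x$3^2 \<ge> 0" by simp
  ultimately have pos: "x$1^2 + x$2^2 + x$3^2 > 0" by linarith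
  then have n2: "n^2 = x$1^2 + x$2^2 + x$3^2" unfolding n_def by simp
  have np: "n > 0" unfolding n_def using pos by simp
  define u where "u = (1/n) *\<^sub>R x"
  have "u$1^2 + u$2^2 + u$3^2 = (x$1^2 + x$2^2 + x$3^2) / n^2"
    unfolding u_def by (simp add: power_divide add_divide_distrib)
  also have "\<dots> = 1" using n2 pos by simp
  finally have u1: "u$1^2 + u$2^2 + u$3^2 = 1" .
  have "A *v u = l *\<^sub>R u" unfolding u_def by (simp add: matrix_vector_mult_scaleR Ax)
  then show ?thesis using u1 by blast
qed

lemma diag3_exists: assumes A: "A \<in> Sym2" shows "\<exists>h\<in>SO3. act2 (transpose h) A \<in> S3"
proof -
  obtain l u where u: "u$1^2 + u$2^2 + u$3^2 = 1" "A *v u = l *\<^sub>R u" using eigen3 by blast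
  obtain r where r: "r \<in> SO3" "r *v e3v = u" using rot_to_e3[OF u(1)] by blast
  define A' where "A' = act2 (transpose r) A"
  have A'S: "A' \<in> Sym2" unfolding A'_def by (rule act2_sym[OF A])
  have "A' *v e3v = transpose r *v (A *v (r *v e3v))"
    unfolding A'_def act2_def by (simp add: matrix_vector_mul_assoc matrix_mul_assoc)
  also have "\<dots> = l *\<^sub>R (transpose r *v (r *v e3v))" using r(2) u(2) by (simp add: matrix_vector_mult_scaleR)
  also have "\<dots> = l *\<^sub>R e3v" by (simp add: matrix_vector_mul_assoc SO3_tt[OF r(1)])
  finally have "A' *v e3v = l *\<^sub>R e3v" .
  then have A'0: "A'$1$3 = 0" "A'$2$3 = 0"
    by (simp_all add: vec_eq_iff M3 e3v_def)
  obtain t where t: "act2 (transpose (rotz t)) A' $1$2 = 0" "act2 (transpose (rotz t)) A' $1$3 = 0"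
      "act2 (transpose (rotz t)) A' $2$3 = 0"
    using rotz_diag[OF A'S A'0] by blast
  define h where "h = r ** rotz t"
  have h: "h \<in> SO3" unfolding h_def by (rule SO3_mult[OF r(1) rotz_SO3])
  have "act2 (transpose h) A = act2 (transpose (rotz t)) A'"
    unfolding h_def A'_def by (simp add: matrix_transpose_mul act2_mult)
  moreover have "act2 (transpose (rotz t)) A' \<in> Sym2" by (rule act2_sym[OF A'S])
  ultimately have "act2 (transpose h) A \<in> S3" using t unfolding S3_def by simp
  then show ?thesis using h by blast
qed

lemma Jor_good: assumes J: "Jor W" shows "good W"
proof (cases "W \<subseteq> S1")
  case True
  have "S1 \<subseteq> W"
  proof
    fix A assume "A \<in> S1"
    then obtain c where "A = c *\<^sub>R mat 1" unfolding S1_def by blast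
    then show "A \<in> W" using J by (simp add: Jor_def subspace_scale)
  qed
  then have "W = S1" using True by blast
  then show ?thesis using good_std by simp
next
  case False
  then obtain A where A: "A \<in> W" "A \<notin> S1" by blast
  have AS: "A \<in> Sym2" using J A(1) by (auto simp: Jor_def)
  obtain h where h: "h \<in> SO3" "act2 (transpose h) A \<in> S3" using diag3_exists[OF AS] by blast
  define D where "D = act2 (transpose h) A"
  have g: "transpose h \<in> SO3" by (rule SO3_transpose[OF h(1)])
  have DW: "D \<in> act2 (transpose h) ` W" unfolding D_def by (rule imageI[OF A(1)])
  have ns: "\<not> (D$1$1 = D$2$2 \<and> D$2$2 = D$3$3)"
  proof
    assume eq: "D$1$1 = D$2$2 \<and> D$2$2 = D$3$3"
    have "D = D$1$1 *\<^sub>R mat 1" using h(2) eq unfolding D_def[symmetric] S3_def Sym2_iff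
      by (simp add: vec_eq_iff M3)
    then have "act2 h D = act2 h (D$1$1 *\<^sub>R mat 1)" by (rule arg_cong)
    also have "\<dots> = D$1$1 *\<^sub>R mat 1" by (simp add: act2_scale act2_I[OF h(1)])
    finally have "act2 h D = D$1$1 *\<^sub>R mat 1" .
    moreover have "act2 h D = A" unfolding D_def by (rule act2_inv1[OF h(1)])
    ultimately show False using A(2) unfolding S1_def by auto
  qed
  have "good (act2 (transpose h) ` W)"
    by (rule good_diag[OF Jor_act[OF J g] DW _ ns]) (use h(2) D_def in simp)
  then show ?thesis by (rule good_transport[OF g])
qed

lemma poly_sum3: "p1 \<in> poly_fun \<Longrightarrow> p2 \<in> poly_fun \<Longrightarrow> p3 \<in> poly_fun \<Longrightarrow>
  q1 \<in> poly_fun \<Longrightarrow> q2 \<in> poly_fun \<Longrightarrow> q3 \<in> poly_fun \<Longrightarrow>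
  (\<lambda>x. p1 x * q1 x + p2 x * q2 x + p3 x * q3 x) \<in> poly_fun"
  by (intro poly_fun.add poly_fun.mult)

lemma equiv_zero: "equiv_poly_map rho (\<lambda>x. 0)"
  unfolding equiv_poly_map_def by (simp add: poly_fun.const Sym2_def act2_def transpose_def vec_eq_iff)

lemma equiv_add: "equiv_poly_map rho f1 \<Longrightarrow> equiv_poly_map rho f2 \<Longrightarrow> equiv_poly_map rho (\<lambda>x. f1 x + f2 x)"
  unfolding equiv_poly_map_def
  by (auto simp: poly_fun.add Sym2_def act2_add transpose_def vec_eq_iff)

lemma equiv_scale: "equiv_poly_map rho f \<Longrightarrow> equiv_poly_map rho (\<lambda>x. c *\<^sub>R f x)"
  unfolding equiv_poly_map_def
  by (auto simp: poly_fun.mult[OF poly_fun.const] Sym2_def act2_scale transpose_def vec_eq_iff)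

lemma equiv_one: "equiv_poly_map rho (\<lambda>x. mat 1)"
  unfolding equiv_poly_map_def by (simp add: poly_fun.const Sym2_def transpose_mat act2_I)

lemma equiv_sq: assumes "equiv_poly_map rho f" shows "equiv_poly_map rho (\<lambda>x. f x ** f x)"
proof -
  have p: "\<And>i j. (\<lambda>x. f x $ i $ j) \<in> poly_fun" and s: "\<And>x. f x \<in> Sym2"
    and e: "\<And>g x. g \<in> SO3 \<Longrightarrow> f (rho g x) = act2 g (f x)"
    using assms unfolding equiv_poly_map_def by auto
  have "(\<lambda>x. (f x ** f x) $ i $ j) \<in> poly_fun" for i j
    unfolding matrix_matrix_mult_def sum_3 by (simp add: poly_sum3 p)
  moreover have "f x ** f x \<in> Sym2" for x using s[of x] by (simp add: Sym2_def matrix_transpose_mul)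
  moreover have "f (rho g x) ** f (rho g x) = act2 g (f x ** f x)" if "g \<in> SO3" for g x
    using e[OF that] act2_sq[OF that] by simp
  ultimately show ?thesis unfolding equiv_poly_map_def by auto
qed

lemma Cov2_Jor: "Jor (Cov2 rho v)"
  unfolding Jor_def
proof (intro conjI)
  show "subspace (Cov2 rho v)"
    unfolding subspace_def Cov2_def
  proof (intro conjI ballI allI)
    show "0 \<in> {f v |f. equiv_poly_map rho f}" using equiv_zero[of rho] by force
    fix x y assume "x \<in> {f v |f. equiv_poly_map rho f}" "y \<in> {f v |f. equiv_poly_map rho f}"
    then obtain f1 f2 where "x = f1 v" "y = f2 v" "equiv_poly_map rho f1" "equiv_poly_map rho f2" by blast
    then show "x + y \<in> {f v |f. equiv_poly_map rho f}" using equiv_add[of rho f1 f2] by force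
  next
    fix c x assume "x \<in> {f v |f. equiv_poly_map rho f}"
    then obtain f1 where "x = f1 v" "equiv_poly_map rho f1" by blast
    then show "c *\<^sub>R x \<in> {f v |f. equiv_poly_map rho f}" using equiv_scale[of rho f1 c] by force
  qed
  show "Cov2 rho v \<subseteq> Sym2" unfolding Cov2_def equiv_poly_map_def by auto
  show "mat 1 \<in> Cov2 rho v" unfolding Cov2_def using equiv_one[of rho] by force
  show "\<forall>A\<in>Cov2 rho v. A ** A \<in> Cov2 rho v"
  proof
    fix A assume "A \<in> Cov2 rho v"
    then obtain f where "A = f v" "equiv_poly_map rho f" unfolding Cov2_def by blast
    then show "A ** A \<in> Cov2 rho v" unfolding Cov2_def using equiv_sq[of rho f] by force
  qed
qed

lemma dim_act2: "h \<in> SO3 \<Longrightarrow> dim (act2 h ` S) = dim S"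
  by (rule dim_image_eq[OF act2_linear]) (metis act2_inv2 inj_on_inverseI)

lemma subspace_entry0: "subspace {A::mat3. A$i$j = 0}"
  by (simp add: subspace_def)

lemma indep_entries: fixes B :: "mat3 set"
  assumes "\<And>b. b \<in> B \<Longrightarrow> \<exists>i j. b$i$j \<noteq> 0 \<and> (\<forall>b'\<in>B. b' \<noteq> b \<longrightarrow> b'$i$j = 0)"
  shows "independent B"
  unfolding dependent_def
proof
  assume "\<exists>a\<in>B. a \<in> span (B - {a})"
  then obtain a where a: "a \<in> B" "a \<in> span (B - {a})" by blast
  obtain i j where ij: "a$i$j \<noteq> 0" "\<forall>b'\<in>B. b' \<noteq> a \<longrightarrow> b'$i$j = 0" using assms[OF a(1)] by blast
  have "span (B - {a}) \<subseteq> {A::mat3. A$i$j = 0}"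
    by (rule span_minimal[OF _ subspace_entry0]) (use ij in auto)
  then show False using a(2) ij(1) by auto
qed

lemma EQ_distinct: "E11 \<noteq> E22" "E11 \<noteq> E33" "E22 \<noteq> E33" "E11 \<noteq> Q12" "E22 \<noteq> Q12" "E33 \<noteq> Q12"
  "E11 \<noteq> Q13" "E22 \<noteq> Q13" "E33 \<noteq> Q13" "E11 \<noteq> Q23" "E22 \<noteq> Q23" "E33 \<noteq> Q23"
  "Q12 \<noteq> Q13" "Q12 \<noteq> Q23" "Q13 \<noteq> Q23" "mat 1 \<noteq> E33"
  by (simp_all add: EQ vec_eq_iff forall_3 mat_def)

lemma dim_S1: "dim S1 = 1"
proof (rule dim_unique[of "{mat 1}"])
  show "{mat 1} \<subseteq> S1" unfolding S1_def by (auto intro: exI[of _ 1])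
  show "S1 \<subseteq> span {mat 1}" unfolding S1_def by (auto intro: span_scale span_base)
  show "independent {mat 1::mat3}" by (rule indep_entries) (auto intro!: exI[of _ 1] simp: mat_def)
qed simp

lemma dim_S2: "dim S2 = 2"
proof (rule dim_unique[of "{mat 1 - E33, E33}"])
  show "{mat 1 - E33, E33} \<subseteq> S2" unfolding S2_def Sym2_iff by (simp add: EQ mat_def)
  show "S2 \<subseteq> span {mat 1 - E33, E33}"
  proof
    fix A assume A: "A \<in> S2"
    have "A = A$1$1 *\<^sub>R (mat 1 - E33) + A$3$3 *\<^sub>R E33"
      using A unfolding S2_def Sym2_iff by (simp add: vec_eq_iff M3 EQ)
    moreover have "A$1$1 *\<^sub>R (mat 1 - E33) + A$3$3 *\<^sub>R E33 \<in> span {mat 1 - E33, E33}"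
      by (intro span_add span_scale span_base) auto
    ultimately show "A \<in> span {mat 1 - E33, E33}" by simp
  qed
  have ne: "mat 1 - E33 \<noteq> E33" by (simp add: EQ vec_eq_iff forall_3 mat_def)
  show "independent {mat 1 - E33, E33}"
  proof (rule indep_entries)
    fix b assume "b \<in> {mat 1 - E33, E33}"
    then show "\<exists>i j. b$i$j \<noteq> 0 \<and> (\<forall>b'\<in>{mat 1 - E33, E33}. b' \<noteq> b \<longrightarrow> b'$i$j = 0)"
    proof
      assume "b = mat 1 - E33" then show ?thesis using ne by (intro exI[of _ 1] exI[of _ 1]) (auto simp: EQ mat_def)
    next
      assume "b \<in> {E33}" then show ?thesis using ne by (intro exI[of _ 3] exI[of _ 3]) (auto simp: EQ mat_def)
    qed
  qed
  show "card {mat 1 - E33, E33} = 2" using ne by simp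
qed

lemma indep_std: assumes "B \<subseteq> {E11, E22, E33, Q12, Q13, Q23}" shows "independent B"
proof (rule indep_entries)
  fix b assume b: "b \<in> B"
  then have "b \<in> {E11, E22, E33, Q12, Q13, Q23}" using assms by blast
  then have "\<exists>i j. b$i$j \<noteq> 0 \<and> (\<forall>b'\<in>{E11, E22, E33, Q12, Q13, Q23}. b' \<noteq> b \<longrightarrow> b'$i$j = 0)"
    apply (elim insertE)
         apply (rule exI[of _ 1], rule exI[of _ 1], simp add: EQ)
        apply (rule exI[of _ 2], rule exI[of _ 2], simp add: EQ)
       apply (rule exI[of _ 3], rule exI[of _ 3], simp add: EQ)
      apply (rule exI[of _ 1], rule exI[of _ 2], simp add: EQ)
     apply (rule exI[of _ 1], rule exI[of _ 3], simp add: EQ)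
    apply (rule exI[of _ 2], rule exI[of _ 3], simp add: EQ)
    apply simp
    done
  then show "\<exists>i j. b$i$j \<noteq> 0 \<and> (\<forall>b'\<in>B. b' \<noteq> b \<longrightarrow> b'$i$j = 0)"
    using assms by blast
qed

lemma dim_S3: "dim S3 = 3"
proof (rule dim_unique[of "{E11, E22, E33}"])
  show "{E11, E22, E33} \<subseteq> S3" unfolding S3_def Sym2_iff by (simp add: EQ)
  show "S3 \<subseteq> span {E11, E22, E33}"
  proof
    fix A assume A: "A \<in> S3"
    have "A = A$1$1 *\<^sub>R E11 + A$2$2 *\<^sub>R E22 + A$3$3 *\<^sub>R E33"
      using A unfolding S3_def Sym2_iff by (simp add: vec_eq_iff M3 EQ)
    moreover have "A$1$1 *\<^sub>R E11 + A$2$2 *\<^sub>R E22 + A$3$3 *\<^sub>R E33 \<in> span {E11, E22, E33}"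
      by (intro span_add span_scale span_base) auto
    ultimately show "A \<in> span {E11, E22, E33}" by simp
  qed
  show "independent {E11, E22, E33}" by (rule indep_std) auto
  show "card {E11, E22, E33} = 3" using EQ_distinct by simp
qed

lemma dim_S4: "dim S4 = 4"
proof (rule dim_unique[of "{E11, E22, E33, Q12}"])
  show "{E11, E22, E33, Q12} \<subseteq> S4" unfolding S4_def Sym2_iff by (simp add: EQ)
  show "S4 \<subseteq> span {E11, E22, E33, Q12}"
  proof
    fix A assume A: "A \<in> S4"
    have "A = A$1$1 *\<^sub>R E11 + A$2$2 *\<^sub>R E22 + A$3$3 *\<^sub>R E33 + A$1$2 *\<^sub>R Q12"
      using A unfolding S4_def Sym2_iff by (simp add: vec_eq_iff M3 EQ)
    moreover have "A$1$1 *\<^sub>R E11 + A$2$2 *\<^sub>R E22 + A$3$3 *\<^sub>R E33 + A$1$2 *\<^sub>R Q12 \<in> span {E11, E22, E33, Q12}"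
      by (intro span_add span_scale span_base) auto
    ultimately show "A \<in> span {E11, E22, E33, Q12}" by simp
  qed
  show "independent {E11, E22, E33, Q12}" by (rule indep_std) auto
  show "card {E11, E22, E33, Q12} = 4" using EQ_distinct by simp
qed

lemma dim_Sym2: "dim Sym2 = 6"
proof (rule dim_unique[of "{E11, E22, E33, Q12, Q13, Q23}"])
  show "{E11, E22, E33, Q12, Q13, Q23} \<subseteq> Sym2" by (simp add: Sym2_iff EQ)
  show "Sym2 \<subseteq> span {E11, E22, E33, Q12, Q13, Q23}"
  proof
    fix A assume A: "A \<in> Sym2"
    have "A$1$1 *\<^sub>R E11 + A$2$2 *\<^sub>R E22 + A$3$3 *\<^sub>R E33 + A$1$2 *\<^sub>R Q12 + A$1$3 *\<^sub>R Q13 + A$2$3 *\<^sub>R Q23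
       \<in> span {E11, E22, E33, Q12, Q13, Q23}"
      by (intro span_add span_scale span_base) auto
    then show "A \<in> span {E11, E22, E33, Q12, Q13, Q23}" using decomp[OF A] by simp
  qed
  show "independent {E11, E22, E33, Q12, Q13, Q23}" by (rule indep_std) auto
  show "card {E11, E22, E33, Q12, Q13, Q23} = 6" using EQ_distinct by simp
qed

lemma sym_group_act: assumes h: "h \<in> SO3"
  shows "sym_group (act2 h ` S) = (\<lambda>g. h ** g ** transpose h) ` sym_group S"
proof
  show "sym_group (act2 h ` S) \<subseteq> (\<lambda>g. h ** g ** transpose h) ` sym_group S"
  proof
    fix g assume g: "g \<in> sym_group (act2 h ` S)"
    then have gS: "g \<in> SO3" and fx: "\<And>A. A \<in> S \<Longrightarrow> act2 g (act2 h A) = act2 h A"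
      unfolding sym_group_def by auto
    define k where "k = transpose h ** g ** h"
    have k: "k \<in> SO3" unfolding k_def by (intro SO3_mult SO3_transpose h gS)
    have "act2 k A = A" if "A \<in> S" for A
      unfolding k_def act2_mult using fx[OF that] act2_inv2[OF h] by simp
    then have "k \<in> sym_group S" using k unfolding sym_group_def by auto
    moreover have "g = h ** k ** transpose h"
      unfolding k_def by (simp add: matrix_mul_assoc SO3_tt2[OF h]) (simp add: matrix_mul_assoc[symmetric] SO3_tt2[OF h])
    ultimately show "g \<in> (\<lambda>g. h ** g ** transpose h) ` sym_group S" by blast
  qed
  show "(\<lambda>g. h ** g ** transpose h) ` sym_group S \<subseteq> sym_group (act2 h ` S)"
  proof
    fix g assume "g \<in> (\<lambda>g. h ** g ** transpose h) ` sym_group S"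
    then obtain k where k: "k \<in> sym_group S" "g = h ** k ** transpose h" by blast
    have kS: "k \<in> SO3" and fx: "\<And>A. A \<in> S \<Longrightarrow> act2 k A = A" using k(1) unfolding sym_group_def by auto
    have gS: "g \<in> SO3" unfolding k(2) by (intro SO3_mult SO3_transpose h kS)
    have "act2 g B = B" if BS: "B \<in> act2 h ` S" for B
    proof -
      obtain A where A: "A \<in> S" "B = act2 h A" using BS by blast
      show ?thesis unfolding k(2) A(2) act2_mult using act2_inv2[OF h] fx[OF A(1)] by simp
    qed
    then show "g \<in> sym_group (act2 h ` S)" using gS unfolding sym_group_def by auto
  qed
qed

lemma SO3_row3: "g \<in> SO3 \<Longrightarrow> g$3$1 * g$3$1 + g$3$2 * g$3$2 + g$3$3 * g$3$3 = 1"
  using arg_cong[OF SO3_tt2, of g "\<lambda>M. M$3$3"] by (simp add: M3)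
lemma SO3_row1: "g \<in> SO3 \<Longrightarrow> g$1$1 * g$1$1 + g$1$2 * g$1$2 + g$1$3 * g$1$3 = 1"
  using arg_cong[OF SO3_tt2, of g "\<lambda>M. M$1$1"] by (simp add: M3)
lemma SO3_row2: "g \<in> SO3 \<Longrightarrow> g$2$1 * g$2$1 + g$2$2 * g$2$2 + g$2$3 * g$2$3 = 1"
  using arg_cong[OF SO3_tt2, of g "\<lambda>M. M$2$2"] by (simp add: M3)
lemma SO3_col11: "g \<in> SO3 \<Longrightarrow> g$1$1 * g$1$1 + g$2$1 * g$2$1 + g$3$1 * g$3$1 = 1"
  using arg_cong[OF SO3_tt, of g "\<lambda>M. M$1$1"] by (simp add: M3)
lemma SO3_col12: "g \<in> SO3 \<Longrightarrow> g$1$1 * g$1$2 + g$2$1 * g$2$2 + g$3$1 * g$3$2 = 0"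
  using arg_cong[OF SO3_tt, of g "\<lambda>M. M$1$2"] by (simp add: M3)

lemma fix33: assumes "g \<in> SO3" "act2 g E33 = E33"
  shows "g$1$3 = 0 \<and> g$2$3 = 0 \<and> g$3$1 = 0 \<and> g$3$2 = 0 \<and> (g$3$3 = 1 \<or> g$3$3 = -1)"
proof -
  have "g$1$3 * g$1$3 = 0" "g$2$3 * g$2$3 = 0" "g$3$3 * g$3$3 = 1"
    using arg_cong[OF assms(2), of "\<lambda>M. M$1$1"] arg_cong[OF assms(2), of "\<lambda>M. M$2$2"]
      arg_cong[OF assms(2), of "\<lambda>M. M$3$3"] by (simp_all add: M3 EQ)
  moreover have "g$3$1 * g$3$1 + g$3$2 * g$3$2 = 0" using SO3_row3[OF assms(1)] calculation(3) by simp
  ultimately show ?thesis by (simp add: square_eq_1_iff sum_squares_eq_zero_iff)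
qed

lemma fix11: assumes "g \<in> SO3" "act2 g E11 = E11"
  shows "g$2$1 = 0 \<and> g$3$1 = 0 \<and> g$1$2 = 0 \<and> g$1$3 = 0 \<and> (g$1$1 = 1 \<or> g$1$1 = -1)"
proof -
  have "g$2$1 * g$2$1 = 0" "g$3$1 * g$3$1 = 0" "g$1$1 * g$1$1 = 1"
    using arg_cong[OF assms(2), of "\<lambda>M. M$2$2"] arg_cong[OF assms(2), of "\<lambda>M. M$3$3"]
      arg_cong[OF assms(2), of "\<lambda>M. M$1$1"] by (simp_all add: M3 EQ)
  moreover have "g$1$2 * g$1$2 + g$1$3 * g$1$3 = 0" using SO3_row1[OF assms(1)] calculation(3) by simp
  ultimately show ?thesis by (simp add: square_eq_1_iff sum_squares_eq_zero_iff)
qed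

lemma fix22: assumes "g \<in> SO3" "act2 g E22 = E22"
  shows "g$1$2 = 0 \<and> g$3$2 = 0 \<and> g$2$1 = 0 \<and> g$2$3 = 0 \<and> (g$2$2 = 1 \<or> g$2$2 = -1)"
proof -
  have "g$1$2 * g$1$2 = 0" "g$3$2 * g$3$2 = 0" "g$2$2 * g$2$2 = 1"
    using arg_cong[OF assms(2), of "\<lambda>M. M$1$1"] arg_cong[OF assms(2), of "\<lambda>M. M$3$3"]
      arg_cong[OF assms(2), of "\<lambda>M. M$2$2"] by (simp_all add: M3 EQ)
  moreover have "g$2$1 * g$2$1 + g$2$3 * g$2$3 = 0" using SO3_row2[OF assms(1)] calculation(3) by simp
  ultimately show ?thesis by (simp add: square_eq_1_iff sum_squares_eq_zero_iff)
qed

lemma fix_diag: assumes "g \<in> SO3" "act2 g E11 = E11" "act2 g E22 = E22" "act2 g E33 = E33"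
  shows "g = diag3 (g$1$1) (g$2$2) (g$3$3) \<and> (g$1$1 = 1 \<or> g$1$1 = -1) \<and> (g$2$2 = 1 \<or> g$2$2 = -1)
     \<and> (g$3$3 = 1 \<or> g$3$3 = -1) \<and> g$1$1 * g$2$2 * g$3$3 = 1"
proof -
  note a = fix11[OF assms(1,2)] fix22[OF assms(1,3)] fix33[OF assms(1,4)]
  have d: "g = diag3 (g$1$1) (g$2$2) (g$3$3)" using a by (simp add: vec_eq_iff forall_3 diag3_def)
  have "det g = 1" using assms(1) by (simp add: SO3_def)
  then have "g$1$1 * g$2$2 * g$3$3 = 1" using a by (simp add: det_3)
  then show ?thesis using d a by simp
qed

lemma mat1_diag: "mat 1 = diag3 1 1 1"
  by (simp add: vec_eq_iff M3)

lemma diag_SO3: "a * a = 1 \<Longrightarrow> b * b = 1 \<Longrightarrow> c * c = 1 \<Longrightarrow> a * b * c = 1 \<Longrightarrow> diag3 a b c \<in> SO3"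
  by (simp add: SO3_def vec_eq_iff M3 det_3)

lemma sym_S1: "sym_group S1 = SO3"
  unfolding sym_group_def S1_def by (auto simp: act2_scale act2_I)

lemma alg_aux: fixes c s x y :: real
  shows "c * x + s * y = 0 \<Longrightarrow> c * y - x * s = 1 \<Longrightarrow> c * c + s * s = 1 \<Longrightarrow> x = - s \<and> y = c"
  by algebra

lemma block_rot: assumes g: "g \<in> SO3" and z: "g$1$3 = 0" "g$2$3 = 0" "g$3$1 = 0" "g$3$2 = 0" "g$3$3 = 1"
  shows "\<exists>t. g = rotz t"
proof -
  have c1: "g$1$1 * g$1$1 + g$2$1 * g$2$1 = 1" using SO3_col11[OF g] z by simp
  have c12: "g$1$1 * g$1$2 + g$2$1 * g$2$2 = 0" using SO3_col12[OF g] z by simp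
  have "det g = 1" using g by (simp add: SO3_def)
  then have dt: "g$1$1 * g$2$2 - g$1$2 * g$2$1 = 1" using z by (simp add: det_3)
  have "(g$1$1)^2 + (g$2$1)^2 = 1" using c1 by (simp add: power2_eq_square)
  then obtain t where t: "g$1$1 = cos t" "g$2$1 = sin t" using sincos_total_2pi by metis
  have "g$1$2 = - sin t \<and> g$2$2 = cos t"
    using alg_aux[of "cos t" "g$1$2" "sin t" "g$2$2"] c12 dt cs1[of t] unfolding t by (simp add: algebra_simps)
  then have "g = rotz t" using t z by (simp add: vec_eq_iff forall_3 rotz_def)
  then show ?thesis by blast
qed

definition dflip :: mat3 where "dflip = diag3 1 (-1) (-1)"

lemma dflip_SO3: "dflip \<in> SO3" unfolding dflip_def by (rule diag_SO3) simp_all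
lemma dflip_sq: "dflip ** dflip = mat 1" by (simp add: vec_eq_iff M3 dflip_def)

lemma S2_fix_rotz: "A \<in> S2 \<Longrightarrow> act2 (rotz t) A = A"
  unfolding S2_def Sym2_iff by (auto simp: vec_eq_iff M3 algebra_simps cs2 cs3)

lemma S2_fix_dflip: "A \<in> S2 \<Longrightarrow> act2 dflip A = A"
  unfolding S2_def Sym2_iff by (simp add: vec_eq_iff M3 dflip_def)

lemma sym_S2: "sym_group S2 = O2"
proof
  show "O2 \<subseteq> sym_group S2"
  proof
    fix g assume "g \<in> O2"
    then obtain t where "g = rotz t \<or> g = rotz t ** dflip" unfolding O2_def dflip_def by blast
    then show "g \<in> sym_group S2"
    proof
      assume "g = rotz t" then show ?thesis unfolding sym_group_def using rotz_SO3 S2_fix_rotz by auto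
    next
      assume "g = rotz t ** dflip" then show ?thesis unfolding sym_group_def
        using SO3_mult[OF rotz_SO3 dflip_SO3] S2_fix_rotz S2_fix_dflip by (auto simp: act2_mult)
    qed
  qed
  show "sym_group S2 \<subseteq> O2"
  proof
    fix g assume g: "g \<in> sym_group S2"
    have gS: "g \<in> SO3" using g unfolding sym_group_def by auto
    have "E33 \<in> S2" unfolding S2_def Sym2_iff by (simp add: EQ)
    then have "act2 g E33 = E33" using g unfolding sym_group_def by auto
    note f = fix33[OF gS this]
    show "g \<in> O2"
    proof (cases "g$3$3 = 1")
      case True
      then obtain t where "g = rotz t" using block_rot[OF gS] f by blast
      then show ?thesis unfolding O2_def by blast
    next
      case False
      then have g33: "g$3$3 = -1" using f by simp
      define g' where "g' = g ** dflip"
      have g'S: "g' \<in> SO3" unfolding g'_def by (rule SO3_mult[OF gS dflip_SO3])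
      have "g'$1$3 = 0" "g'$2$3 = 0" "g'$3$1 = 0" "g'$3$2 = 0" "g'$3$3 = 1"
        using f g33 unfolding g'_def by (simp_all add: M3 dflip_def)
      then obtain t where t: "g' = rotz t" using block_rot[OF g'S] by blast
      have "g = g' ** dflip" unfolding g'_def by (simp add: matrix_mul_assoc[symmetric] dflip_sq)
      then show ?thesis unfolding O2_def t dflip_def by blast
    qed
  qed
qed

lemma act2_diag: "act2 (diag3 a b c) A = (\<chi> i j. (vector [a,b,c] :: real^3) $ i * (vector [a,b,c] :: real^3) $ j * A$i$j)"
  by (simp add: vec_eq_iff M3 algebra_simps)

lemma fixes_in: "g \<in> sym_group S \<Longrightarrow> A \<in> S \<Longrightarrow> act2 g A = A"
  unfolding sym_group_def by auto

lemma E_in_S3: "E11 \<in> S3" "E22 \<in> S3" "E33 \<in> S3"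
  unfolding S3_def Sym2_iff by (simp_all add: EQ)
lemma S3_sub_S4: "S3 \<subseteq> S4" unfolding S3_def S4_def by auto
lemma S4_sub_Sym2: "S4 \<subseteq> Sym2" unfolding S4_def by auto
lemma Q12_in_S4: "Q12 \<in> S4" unfolding S4_def Sym2_iff by (simp add: EQ)
lemma Q13_in_Sym2: "Q13 \<in> Sym2" unfolding Sym2_iff by (simp add: EQ)

lemma sym_diag: assumes "g \<in> sym_group S" "S3 \<subseteq> S"
  shows "g = diag3 (g$1$1) (g$2$2) (g$3$3) \<and> (g$1$1 = 1 \<or> g$1$1 = -1) \<and> (g$2$2 = 1 \<or> g$2$2 = -1)
     \<and> (g$3$3 = 1 \<or> g$3$3 = -1) \<and> g$1$1 * g$2$2 * g$3$3 = 1"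
  apply (rule fix_diag)
  using assms E_in_S3 by (auto simp: sym_group_def)

lemma sym_S3: "sym_group S3 = D2"
proof
  show "sym_group S3 \<subseteq> D2"
  proof
    fix g assume g: "g \<in> sym_group S3"
    note d = sym_diag[OF g order_refl]
    then have "g = diag3 1 1 1 \<or> g = diag3 1 (-1) (-1) \<or> g = diag3 (-1) 1 (-1) \<or> g = diag3 (-1) (-1) 1"
      by (elim conjE disjE) simp_all
    then show "g \<in> D2" unfolding D2_def mat1_diag by blast
  qed
  show "D2 \<subseteq> sym_group S3"
    unfolding D2_def mat1_diag sym_group_def
    by (auto intro!: diag_SO3 simp: act2_diag S3_def Sym2_iff vec_eq_iff forall_3)
qed

lemma sym_S4: "sym_group S4 = Z2"
proof
  show "sym_group S4 \<subseteq> Z2"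
  proof
    fix g assume g: "g \<in> sym_group S4"
    note d = sym_diag[OF g S3_sub_S4]
    have "act2 g Q12 = Q12" by (rule fixes_in[OF g Q12_in_S4])
    then have "g$1$1 * g$2$2 = 1" using d arg_cong[of _ _ "\<lambda>M. M$1$2"]
      by (metis (no_types, lifting) act2_diag vector_3(1) vector_3(2) vec_lambda_beta Q12_def mult.right_neutral)
    then have "g = diag3 1 1 1 \<or> g = diag3 (-1) (-1) 1"
      using d by (elim conjE disjE) simp_all
    then show "g \<in> Z2" unfolding Z2_def mat1_diag by blast
  qed
  show "Z2 \<subseteq> sym_group S4"
    unfolding Z2_def mat1_diag sym_group_def
    by (auto intro!: diag_SO3 simp: act2_diag S4_def Sym2_iff vec_eq_iff forall_3)
qed

lemma sym_Sym2: "sym_group Sym2 = {mat 1}"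
proof
  show "sym_group Sym2 \<subseteq> {mat 1}"
  proof
    fix g assume g: "g \<in> sym_group Sym2"
    note d = sym_diag[OF g order.trans[OF S3_sub_S4 S4_sub_Sym2]]
    have "act2 g Q12 = Q12" by (rule fixes_in[OF g subsetD[OF S4_sub_Sym2 Q12_in_S4]])
    then have "g$1$1 * g$2$2 = 1" using d
      by (metis (no_types, lifting) act2_diag vector_3(1) vector_3(2) vec_lambda_beta Q12_def mult.right_neutral)
    have "act2 g Q13 = Q13" by (rule fixes_in[OF g Q13_in_Sym2])
    then have "g$1$1 * g$3$3 = 1" using d
      by (metis (no_types, lifting) act2_diag vector_3(1) vector_3(3) vec_lambda_beta Q13_def mult.right_neutral)
    then have "g = diag3 1 1 1"
      using d \<open>g$1$1 * g$2$2 = 1\<close> by (elim conjE disjE) simp_all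
    then show "g \<in> {mat 1}" unfolding mat1_diag by blast
  qed
  show "{mat 1} \<subseteq> sym_group Sym2"
    unfolding sym_group_def using SO3_one by (auto simp: act2_one)
qed

definition cj :: "mat3 \<Rightarrow> mat3 \<Rightarrow> mat3" where "cj h g = h ** g ** transpose h"

lemma cj_inv: "h \<in> SO3 \<Longrightarrow> cj (transpose h) (cj h g) = g"
  unfolding cj_def by (simp add: matrix_mul_assoc SO3_tt) (simp add: matrix_mul_assoc[symmetric] SO3_tt)

lemma cj_inj: "h \<in> SO3 \<Longrightarrow> inj (cj h)"
  by (metis cj_inv injI)

lemma cj_comp: "cj a (cj b g) = cj (a ** b) g"
  unfolding cj_def by (simp add: matrix_transpose_mul matrix_mul_assoc)

lemma cj_img_comp: "cj a ` (cj b ` X) = cj (a ** b) ` X"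
  by (simp add: image_image cj_comp)

lemma cj_img_inv: "h \<in> SO3 \<Longrightarrow> cj (transpose h) ` (cj h ` X) = X"
  by (simp add: image_image cj_inv)

lemma cj_SO3: assumes "h \<in> SO3" shows "cj h ` SO3 = SO3"
proof
  show "cj h ` SO3 \<subseteq> SO3" unfolding cj_def using assms by (auto intro!: SO3_mult SO3_transpose)
  show "SO3 \<subseteq> cj h ` SO3"
  proof
    fix g assume g: "g \<in> SO3"
    have "g = cj h (cj (transpose h) g)" using cj_inv[OF SO3_transpose[OF assms], of g] by simp
    moreover have "cj (transpose h) g \<in> SO3" unfolding cj_def using assms g by (auto intro!: SO3_mult SO3_transpose)
    ultimately show "g \<in> cj h ` SO3" by blast
  qed
qed

lemma O2_sub: "O2 \<subseteq> SO3"
  unfolding O2_def using rotz_SO3 SO3_mult[OF rotz_SO3 dflip_SO3] dflip_def by auto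

lemma O2_infinite: "infinite O2"
proof
  assume f: "finite O2"
  have "inj_on rotz {0..pi}"
  proof (rule inj_onI)
    fix x y assume "x \<in> {0..pi}" "y \<in> {0..pi}" "rotz x = rotz y"
    moreover have "cos x = rotz x $1$1" "cos y = rotz y $1$1" by (simp_all add: rotz_def)
    ultimately show "x = y" using cos_inj_pi by auto
  qed
  moreover have "rotz ` {0..pi} \<subseteq> O2" unfolding O2_def by auto
  then have "finite (rotz ` {0..pi})" using f finite_subset by blast
  ultimately have "finite {0..pi::real}" using finite_image_iff by blast
  then show False using pi_gt_zero infinite_Icc by blast
qed

lemma SO3_infinite: "infinite SO3"
  using O2_infinite O2_sub infinite_super by blast

lemma px_notin_O2: "px \<notin> O2"
proof
  assume "px \<in> O2"
  then obtain t where "px = rotz t \<or> px = rotz t ** diag3 1 (-1) (-1)" unfolding O2_def by blast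
  then have "px $3$3 = rotz t $3$3 \<or> px $3$3 = (rotz t ** diag3 1 (-1) (-1)) $3$3" by auto
  moreover have "rotz t $3$3 = 1" "(rotz t ** diag3 1 (-1) (-1)) $3$3 = -1" by (simp_all add: M3)
  moreover have "px $3$3 = 0" by (simp add: px_def)
  ultimately show False by simp
qed

lemma SO3_ne_O2: "SO3 \<noteq> O2"
  using px_SO3 px_notin_O2 by blast

lemma card_D2: "card D2 = 4" and card_Z2: "card Z2 = 2"
  by (simp_all add: D2_def Z2_def mat1_diag vec_eq_iff diag3_def forall_3)

lemma fin_D2: "finite D2" and fin_Z2: "finite Z2"
  by (simp_all add: D2_def Z2_def)

definition Ls :: "mat3 set set" where "Ls = {SO3, O2, D2, Z2, {mat 1}}"

lemma Ls_distinct: "SO3 \<noteq> O2" "SO3 \<noteq> D2" "SO3 \<noteq> Z2" "SO3 \<noteq> {mat 1}" "O2 \<noteq> D2" "O2 \<noteq> Z2"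
  "O2 \<noteq> {mat 1}" "D2 \<noteq> Z2" "D2 \<noteq> {mat 1}" "Z2 \<noteq> {mat 1}"
proof -
  show "SO3 \<noteq> O2" by (rule SO3_ne_O2)
  show "SO3 \<noteq> D2" using SO3_infinite fin_D2 by metis
  show "SO3 \<noteq> Z2" using SO3_infinite fin_Z2 by metis
  show "SO3 \<noteq> {mat 1}" using SO3_infinite by (metis finite.emptyI finite.insertI)
  show "O2 \<noteq> D2" using O2_infinite fin_D2 by metis
  show "O2 \<noteq> Z2" using O2_infinite fin_Z2 by metis
  show "O2 \<noteq> {mat 1}" using O2_infinite by (metis finite.emptyI finite.insertI)
  show "D2 \<noteq> Z2" using card_D2 card_Z2 by auto
  show "D2 \<noteq> {mat 1}"
  proof
    assume "D2 = {mat 1}" then have "card D2 = card {mat 1::mat3}" by (rule arg_cong)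
    then show False using card_D2 by simp
  qed
  show "Z2 \<noteq> {mat 1}"
  proof
    assume "Z2 = {mat 1}" then have "card Z2 = card {mat 1::mat3}" by (rule arg_cong)
    then show False using card_Z2 by simp
  qed
qed

lemma table: assumes X: "X \<in> Ls" and Y: "Y \<in> Ls" and g: "g \<in> SO3" and eq: "X = cj g ` Y"
  shows "X = Y"
proof -
  have fin: "finite X \<longleftrightarrow> finite Y" using eq cj_inj[OF g] by (simp add: finite_image_iff inj_on_subset)
  have cd: "card X = card Y" using eq cj_inj[OF g] by (simp add: card_image inj_on_subset)
  have s1: "SO3 \<noteq> cj g ` O2"
  proof
    assume "SO3 = cj g ` O2"
    then have "cj (transpose g) ` SO3 = cj (transpose g) ` (cj g ` O2)" by (rule arg_cong)
    also have "\<dots> = O2" by (rule cj_img_inv[OF g])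
    finally have "cj (transpose g) ` SO3 = O2" .
    then show False using cj_SO3[OF SO3_transpose[OF g]] SO3_ne_O2 by simp
  qed
  have s2: "O2 \<noteq> cj g ` SO3" using cj_SO3[OF g] SO3_ne_O2 by simp
  have XL: "X = SO3 \<or> X = O2 \<or> X = D2 \<or> X = Z2 \<or> X = {mat 1}" using X unfolding Ls_def by blast
  have YL: "Y = SO3 \<or> Y = O2 \<or> Y = D2 \<or> Y = Z2 \<or> Y = {mat 1}" using Y unfolding Ls_def by blast
  have k1: "\<not> (X = SO3 \<and> Y = O2)" using eq s1 by blast
  have k2: "\<not> (X = O2 \<and> Y = SO3)" using eq s2 by blast
  show ?thesis using XL YL fin cd k1 k2
    by (elim disjE) (simp_all add: SO3_infinite O2_infinite fin_D2 fin_Z2 card_D2 card_Z2)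
qed

lemma class_iff: assumes h0: "h0 \<in> SO3" and Hk: "Hk \<in> Ls" and H: "H \<in> Ls"
  shows "(\<exists>h\<in>SO3. cj h0 ` Hk = cj h ` H) \<longleftrightarrow> H = Hk"
proof
  assume "\<exists>h\<in>SO3. cj h0 ` Hk = cj h ` H"
  then obtain h where h: "h \<in> SO3" "cj h0 ` Hk = cj h ` H" by blast
  then have "Hk = cj (transpose h0 ** h) ` H"
    using cj_img_inv[OF h0, of Hk] by (simp add: cj_img_comp)
  then show "H = Hk" using table[OF Hk H SO3_mult[OF SO3_transpose[OF h0] h(1)]] by simp
next
  assume "H = Hk" then show "\<exists>h\<in>SO3. cj h0 ` Hk = cj h ` H" using h0 by blast
qed

lemma cj_eta: "cj h = (\<lambda>g. h ** g ** transpose h)"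
  by (rule ext) (simp add: cj_def)

theorem proposition7p5:
  fixes rho :: "mat3 \<Rightarrow> 'v::euclidean_space \<Rightarrow> 'v" and v :: 'v
  assumes "SO3_rep rho"
  shows "dim (Cov2 rho v) \<in> {1, 2, 3, 4, 6}
    \<and> (has_sym_class (Cov2 rho v) SO3 \<longleftrightarrow> dim (Cov2 rho v) = 1)
    \<and> (has_sym_class (Cov2 rho v) O2 \<longleftrightarrow> dim (Cov2 rho v) = 2)
    \<and> (has_sym_class (Cov2 rho v) D2 \<longleftrightarrow> dim (Cov2 rho v) = 3)
    \<and> (has_sym_class (Cov2 rho v) Z2 \<longleftrightarrow> dim (Cov2 rho v) = 4)
    \<and> (has_sym_class (Cov2 rho v) {mat 1} \<longleftrightarrow> dim (Cov2 rho v) = 6)"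
proof -
  define W where "W = Cov2 rho v"
  have J: "Jor W" unfolding W_def by (rule Cov2_Jor)
  obtain h0 S where h0: "h0 \<in> SO3" and S: "S \<in> {S1,S2,S3,S4,Sym2}" and WS: "W = act2 h0 ` S"
    using Jor_good[OF J] unfolding good_def by blast
  have dimW: "dim W = dim S" unfolding WS by (rule dim_act2[OF h0])
  have symW: "sym_group W = cj h0 ` sym_group S" unfolding WS sym_group_act[OF h0] cj_eta ..
  have SL: "sym_group S \<in> Ls" using S sym_S1 sym_S2 sym_S3 sym_S4 sym_Sym2 unfolding Ls_def by auto
  have cls: "has_sym_class W H \<longleftrightarrow> H = sym_group S" if H: "H \<in> Ls" for H
  proof -
    have "has_sym_class W H \<longleftrightarrow> (\<exists>h\<in>SO3. cj h0 ` sym_group S = cj h ` H)"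
      unfolding has_sym_class_def symW cj_eta ..
    also have "\<dots> \<longleftrightarrow> H = sym_group S" by (rule class_iff[OF h0 SL H])
    finally show ?thesis .
  qed
  have L: "SO3 \<in> Ls" "O2 \<in> Ls" "D2 \<in> Ls" "Z2 \<in> Ls" "{mat 1} \<in> Ls" by (simp_all add: Ls_def)
  note C = cls[OF L(1)] cls[OF L(2)] cls[OF L(3)] cls[OF L(4)] cls[OF L(5)]
  note DS = Ls_distinct Ls_distinct[THEN not_sym]
  consider "S = S1" | "S = S2" | "S = S3" | "S = S4" | "S = Sym2" using S by blast
  then have "dim W \<in> {1, 2, 3, 4, 6}
    \<and> (has_sym_class W SO3 \<longleftrightarrow> dim W = 1)
    \<and> (has_sym_class W O2 \<longleftrightarrow> dim W = 2)
    \<and> (has_sym_class W D2 \<longleftrightarrow> dim W = 3)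
    \<and> (has_sym_class W Z2 \<longleftrightarrow> dim W = 4)
    \<and> (has_sym_class W {mat 1} \<longleftrightarrow> dim W = 6)"
  proof cases
    case 1
    then have "dim W = 1" "sym_group S = SO3" using dimW dim_S1 sym_S1 by auto
    then show ?thesis using C DS by simp
  next
    case 2
    then have "dim W = 2" "sym_group S = O2" using dimW dim_S2 sym_S2 by auto
    then show ?thesis using C DS by simp
  next
    case 3
    then have "dim W = 3" "sym_group S = D2" using dimW dim_S3 sym_S3 by auto
    then show ?thesis using C DS by simp
  next
    case 4
    then have "dim W = 4" "sym_group S = Z2" using dimW dim_S4 sym_S4 by auto
    then show ?thesis using C DS by simp
  next
    case 5
    then have "dim W = 6" "sym_group S = {mat 1}" using dimW dim_Sym2 sym_Sym2 by auto
    then show ?thesis using C DS by simp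
  qed
  then show ?thesis unfolding W_def .
qed

end
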